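(* Let $H=(S_0,e_0,S_1,\dots)$ be a history sequence of the Simpler Lazy Set algorithm, let $S_i$ be a state of $H$, and let $a,b$ be active addresses of $S_i$ with $a\neq\mathsf T$ such that the path from $a$ to $\mathsf T$ in $S_i$ does not contain $b$. Then the path from $a$ to $\mathsf T$ in $S_{i+1}$ does not contain $b$. Consequently, for every $j>i$, $b$ is not on the path from $a$ to $\mathsf T$ in $S_j$.
   Context: Simpler Lazy Set algorithm. Fix a countably infinite set $A$ of addresses with distinguished $\mathsf H,\mathsf T$; $\mathrm{Number}=\mathbb N\cup\{-1,\infty\}$. A state $S$: set $\mathrm{Active}^S\subseteq A$, $\mathrm{Next}^S:\mathrm{Active}^S\setminus\{\mathsf T\}\to A$, $\mathrm{Val}^S:\mathrm{Active}^S\to\mathrm{Number}$, and for each process $p$: $PC_p\in\{0,1,2,3.1,\dots,3.5\}$, $x_p\in\mathbb N$, $\mathrm{curr}_p\in A$, $\mathrm{status}_p$. $S$ is normal if $\mathrm{Active}^S$ is finite, $\mathsf H,\mathsf T$ are active with values $-1,\infty$, other active addresses have values in $\mathbb N$, and for active $a\neq\mathsf T$, $\mathrm{Next}(a)$ is active with $\mathrm{Val}(a)<\mathrm{Val}(\mathrm{Next}(a))$. A path is a sequence $a_1,\dots,a_m$ ($m>1$) of active addresses with $\mathrm{Next}(a_i)=a_{i+1}$; in a normal state each active address $a\ne\mathsf T$ lies on a unique path from $a$ to $\mathsf T$; the main branch is the path from $\mathsf H$ to $\mathsf T$. Initial state: $\mathrm{Active}=\{\mathsf H,\mathsf T\}$,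 $\mathrm{Next}(\mathsf H)=\mathsf T$, all $PC_p=0$. Steps $(S,e,T)$ of a process $p$ on a normal $S$: (i) invocation: $PC_p$ from $0$ to $1$, $2$ or $3.1$, with $x_p\in\mathbb N$ arbitrary; (ii) failure: $PC_p$ from $1$ or $2$ to $0$ with $\chi(e)=f$, nothing else changes; (iii) $\mathrm{AD}(x)$ ($x=x_p$, $PC_p$ from $1$ to $0$): with $\mathfrak p$ the main-branch address having $\mathrm{Val}(\mathfrak p)<x\le\mathrm{Val}(\mathrm{Next}(\mathfrak p))$: if $\mathrm{Val}(\mathrm{Next}(\mathfrak p))=x$, no other change, $\chi(e)=1$; else a new address $a\notin\mathrm{Active}^S$ is made active with $\mathrm{Val}(a)=x$, $\mathrm{Next}^T(\mathfrak p)=a$, $\mathrm{Next}^T(a)=\mathrm{Next}^S(\mathfrak p)$, $\chi(e)=0$; (iv) $\mathrm{RM}(x)$ ($PC_p$ from $2$ to $0$): if the main branch has an address $cu$ of value $x$, with $pred$ its main-branch predecessor, set $\mathrm{Next}^T(pred)=\mathrm{Next}^S(cu)$, $\chi(e)=1$; else no change, $\chi(e)=0$; (v) CONTAINS$(x)$ lines, each an atomic step changing only $\mathrm{curr}_p,PC_p,\mathrm{status}_p$: 3.1 $\mathrm{curr}_p:=\mathsf H$; 3.2/3.3 $\mathrm{curr}_p:=\mathrm{Next}(\mathrm{curr}_p)$; 3.4 if $\mathrm{Val}(\mathrm{curr}_p)\ge x$ go to 3.5 else to 3.3; 3.5 return $1$ if $\mathrm{Val}(\mathrm{curr}_p)=x$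 else $0$, $PC_p:=0$. A history sequence is $(S_0,e_0,S_1,\dots)$ with $S_0$ the initial state and each $(S_i,e_i,S_{i+1})$ a step of some process. *)

theory Defs
  imports Main "HOL-Library.Countable" "HOL-Library.Extended_Nat"
begin

datatype num = NegOne | Fin nat | PInf

fun num_less :: "num \<Rightarrow> num \<Rightarrow> bool" where
  "num_less NegOne NegOne = False"
| "num_less NegOne _ = True"
| "num_less (Fin m) (Fin n) = (m < n)"
| "num_less (Fin _) NegOne = False"
| "num_less (Fin _) PInf = True"
| "num_less PInf _ = False"

definition num_le :: "num \<Rightarrow> num \<Rightarrow> bool" where
  "num_le u v \<longleftrightarrow> u = v \<or> num_less u v"

datatype pcv = PC0 | PC1 | PC2 | PC31 | PC32 | PC33 | PC34 | PC35

text \<open>A state. Next is only meaningful on Active - {T}, Val only on Active;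
  the step relations below only constrain them there.\<close>
record ('a, 'p) lstate =
  active :: "'a set"
  nxt    :: "'a \<Rightarrow> 'a"
  val    :: "'a \<Rightarrow> num"
  pc     :: "'p \<Rightarrow> pcv"
  xp     :: "'p \<Rightarrow> nat"
  curr   :: "'p \<Rightarrow> 'a"
  status :: "'p \<Rightarrow> nat"

datatype resp = RFail | R0 | R1 | RNone

datatype ekind = KInv | KFail | KAD | KRM | KLine pcv

datatype 'p event = Ev (ev_proc: 'p) (ev_kind: ekind) (ev_resp: resp)

definition normal :: "'a \<Rightarrow> 'a \<Rightarrow> ('a, 'p) lstate \<Rightarrow> bool" where
  "normal H T S \<longleftrightarrow>
     finite (active S) \<and> H \<in> active S \<and> T \<in> active S \<and>
     val S H = NegOne \<and> val S T = PInf \<and>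
     (\<forall>a \<in> active S - {H, T}. \<exists>n. val S a = Fin n) \<and>
     (\<forall>a \<in> active S - {T}. nxt S a \<in> active S \<and> num_less (val S a) (val S (nxt S a)))"

text \<open>A path: a sequence a_1,...,a_m (m > 1) of active addresses with Next(a_i) = a_(i+1)
  (so a_i \<noteq> T for i < m, since Next is defined only on Active - {T}).\<close>
definition is_path :: "'a \<Rightarrow> ('a, 'p) lstate \<Rightarrow> 'a list \<Rightarrow> bool" where
  "is_path T S xs \<longleftrightarrow> length xs > 1 \<and> set xs \<subseteq> active S \<and>
     (\<forall>i. Suc i < length xs \<longrightarrow> xs ! i \<noteq> T \<and> nxt S (xs ! i) = xs ! Suc i)"

definition on_path :: "'a \<Rightarrow> ('a, 'p) lstate \<Rightarrow> 'a \<Rightarrow> 'a \<Rightarrow> bool" where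
  "on_path T S a b \<longleftrightarrow> (\<exists>xs. is_path T S xs \<and> hd xs = a \<and> last xs = T \<and> b \<in> set xs)"

definition main_branch :: "'a \<Rightarrow> 'a \<Rightarrow> ('a, 'p) lstate \<Rightarrow> 'a \<Rightarrow> bool" where
  "main_branch H T S c \<longleftrightarrow> on_path T S H c"

definition same_shared :: "'a \<Rightarrow> ('a, 'p) lstate \<Rightarrow> ('a, 'p) lstate \<Rightarrow> bool" where
  "same_shared T S S' \<longleftrightarrow> active S' = active S \<and>
     (\<forall>c \<in> active S - {T}. nxt S' c = nxt S c) \<and>
     (\<forall>c \<in> active S. val S' c = val S c)"

definition others_same :: "'p \<Rightarrow> ('a, 'p) lstate \<Rightarrow> ('a, 'p) lstate \<Rightarrow> bool" where
  "others_same p S S' \<longleftrightarrow> (\<forall>q. q \<noteq> p \<longrightarrow>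
     pc S' q = pc S q \<and> xp S' q = xp S q \<and> curr S' q = curr S q \<and> status S' q = status S q)"

definition local_frame :: "'a \<Rightarrow> 'p \<Rightarrow> ('a, 'p) lstate \<Rightarrow> ('a, 'p) lstate \<Rightarrow> bool" where
  "local_frame T p S S' \<longleftrightarrow> same_shared T S S' \<and> others_same p S S' \<and> xp S' p = xp S p"

definition step_inv :: "'a \<Rightarrow> 'p \<Rightarrow> ('a, 'p) lstate \<Rightarrow> 'p event \<Rightarrow> ('a, 'p) lstate \<Rightarrow> bool" where
  "step_inv T p S e S' \<longleftrightarrow> e = Ev p KInv RNone \<and> pc S p = PC0 \<and>
     pc S' p \<in> {PC1, PC2, PC31} \<and> same_shared T S S' \<and> others_same p S S' \<and>
     curr S' p = curr S p \<and> status S' p = status S p"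

definition step_fail :: "'a \<Rightarrow> 'p \<Rightarrow> ('a, 'p) lstate \<Rightarrow> 'p event \<Rightarrow> ('a, 'p) lstate \<Rightarrow> bool" where
  "step_fail T p S e S' \<longleftrightarrow> e = Ev p KFail RFail \<and> pc S p \<in> {PC1, PC2} \<and> pc S' p = PC0 \<and>
     local_frame T p S S' \<and> curr S' p = curr S p \<and> status S' p = status S p"

definition step_ad :: "'a \<Rightarrow> 'a \<Rightarrow> 'p \<Rightarrow> ('a, 'p) lstate \<Rightarrow> 'p event \<Rightarrow> ('a, 'p) lstate \<Rightarrow> bool" where
  "step_ad H T p S e S' \<longleftrightarrow> pc S p = PC1 \<and> pc S' p = PC0 \<and>
     others_same p S S' \<and> xp S' p = xp S p \<and> curr S' p = curr S p \<and> status S' p = status S p \<and>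
     (\<exists>pp. main_branch H T S pp \<and> pp \<noteq> T \<and>
        num_less (val S pp) (Fin (xp S p)) \<and> num_le (Fin (xp S p)) (val S (nxt S pp)) \<and>
        (if val S (nxt S pp) = Fin (xp S p) then
           same_shared T S S' \<and> e = Ev p KAD R1
         else
           e = Ev p KAD R0 \<and>
           (\<exists>a. a \<notin> active S \<and> active S' = insert a (active S) \<and>
              val S' a = Fin (xp S p) \<and> (\<forall>c \<in> active S. val S' c = val S c) \<and>
              nxt S' pp = a \<and> nxt S' a = nxt S pp \<and>
              (\<forall>c \<in> active S - {T, pp}. nxt S' c = nxt S c))))"

definition step_rm :: "'a \<Rightarrow> 'a \<Rightarrow> 'p \<Rightarrow> ('a, 'p) lstate \<Rightarrow> 'p event \<Rightarrow> ('a, 'p) lstate \<Rightarrow> bool" where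
  "step_rm H T p S e S' \<longleftrightarrow> pc S p = PC2 \<and> pc S' p = PC0 \<and>
     others_same p S S' \<and> xp S' p = xp S p \<and> curr S' p = curr S p \<and> status S' p = status S p \<and>
     (if \<exists>cu. main_branch H T S cu \<and> val S cu = Fin (xp S p) then
        e = Ev p KRM R1 \<and>
        (\<exists>cu pred. main_branch H T S cu \<and> val S cu = Fin (xp S p) \<and>
           main_branch H T S pred \<and> pred \<noteq> T \<and> nxt S pred = cu \<and>
           active S' = active S \<and> (\<forall>c \<in> active S. val S' c = val S c) \<and>
           nxt S' pred = nxt S cu \<and> (\<forall>c \<in> active S - {T, pred}. nxt S' c = nxt S c))
      else e = Ev p KRM R0 \<and> same_shared T S S')"

definition step_contains :: "'a \<Rightarrow> 'a \<Rightarrow> 'p \<Rightarrow> ('a, 'p) lstate \<Rightarrow> 'p event \<Rightarrow> ('a, 'p) lstate \<Rightarrow> bool" where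
  "step_contains H T p S e S' \<longleftrightarrow> local_frame T p S S' \<and>
     ((pc S p = PC31 \<and> e = Ev p (KLine PC31) RNone \<and> curr S' p = H \<and> pc S' p = PC32 \<and>
         status S' p = status S p) \<or>
      (pc S p = PC32 \<and> e = Ev p (KLine PC32) RNone \<and> curr S' p = nxt S (curr S p) \<and>
         pc S' p = PC34 \<and> status S' p = status S p) \<or>
      (pc S p = PC33 \<and> e = Ev p (KLine PC33) RNone \<and> curr S' p = nxt S (curr S p) \<and>
         pc S' p = PC34 \<and> status S' p = status S p) \<or>
      (pc S p = PC34 \<and> e = Ev p (KLine PC34) RNone \<and> curr S' p = curr S p \<and>
         pc S' p = (if num_le (Fin (xp S p)) (val S (curr S p)) then PC35 else PC33) \<and>
         status S' p = status S p) \<or>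
      (pc S p = PC35 \<and> curr S' p = curr S p \<and> pc S' p = PC0 \<and>
         (if val S (curr S p) = Fin (xp S p)
          then status S' p = 1 \<and> e = Ev p (KLine PC35) R1
          else status S' p = 0 \<and> e = Ev p (KLine PC35) R0)))"

definition step :: "'a \<Rightarrow> 'a \<Rightarrow> ('a, 'p) lstate \<Rightarrow> 'p event \<Rightarrow> ('a, 'p) lstate \<Rightarrow> bool" where
  "step H T S e S' \<longleftrightarrow> normal H T S \<and> (\<exists>p.
     step_inv T p S e S' \<or> step_fail T p S e S' \<or> step_ad H T p S e S' \<or>
     step_rm H T p S e S' \<or> step_contains H T p S e S')"

definition initial :: "'a \<Rightarrow> 'a \<Rightarrow> ('a, 'p) lstate \<Rightarrow> bool" where
  "initial H T S \<longleftrightarrow> active S = {H, T} \<and> nxt S H = T \<and>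
     val S H = NegOne \<and> val S T = PInf \<and> (\<forall>p. pc S p = PC0)"

definition history :: "'a \<Rightarrow> 'a \<Rightarrow> (nat \<Rightarrow> ('a, 'p) lstate) \<Rightarrow> (nat \<Rightarrow> 'p event) \<Rightarrow> enat \<Rightarrow> bool" where
  "history H T S e N \<longleftrightarrow> initial H T (S 0) \<and>
     (\<forall>i. enat (Suc i) \<le> N \<longrightarrow> step H T (S i) (e i) (S (Suc i)))"

end

theory Submission
  imports Defs
begin

fun chain :: "'a \<Rightarrow> ('a, 'p) lstate \<Rightarrow> 'a list \<Rightarrow> bool" where
  "chain T S [] = True"
| "chain T S [x] = (x \<in> active S)"
| "chain T S (x # y # ys) = (x \<in> active S \<and> x \<noteq> T \<and> nxt S x = y \<and> chain T S (y # ys))"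

lemma chain_iff:
  "chain T S xs \<longleftrightarrow> set xs \<subseteq> active S \<and>
     (\<forall>i. Suc i < length xs \<longrightarrow> xs ! i \<noteq> T \<and> nxt S (xs ! i) = xs ! Suc i)"
proof (induction xs rule: induct_list012)
  case (3 x y ys)
  have e: "(\<forall>i. Suc i < length (x # y # ys) \<longrightarrow> (x # y # ys) ! i \<noteq> T \<and> nxt S ((x # y # ys) ! i) = (x # y # ys) ! Suc i)
     \<longleftrightarrow> (x \<noteq> T \<and> nxt S x = y) \<and> (\<forall>i. Suc i < length (y # ys) \<longrightarrow> (y # ys) ! i \<noteq> T \<and> nxt S ((y # ys) ! i) = (y # ys) ! Suc i)"
    (is "?L \<longleftrightarrow> ?R")
  proof
    assume ?L
    then show ?R
      by (metis Suc_less_eq length_Cons nth_Cons_0 nth_Cons_Suc zero_less_Suc)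
  next
    assume r: ?R
    show ?L
    proof (intro allI impI)
      fix i assume "Suc i < length (x # y # ys)"
      then show "(x # y # ys) ! i \<noteq> T \<and> nxt S ((x # y # ys) ! i) = (x # y # ys) ! Suc i"
        using r by (cases i) auto
    qed
  qed
  have "chain T S (y # ys) = (set (y # ys) \<subseteq> active S \<and>
    (\<forall>i. Suc i < length (y # ys) \<longrightarrow> (y # ys) ! i \<noteq> T \<and> nxt S ((y # ys) ! i) = (y # ys) ! Suc i))"
    using 3 by blast
  then show ?case using e by auto
qed auto

lemma is_path_chain: "is_path T S xs \<longleftrightarrow> length xs > 1 \<and> chain T S xs"
  unfolding is_path_def chain_iff by auto

lemma on_path_chain:
  "on_path T S a b \<longleftrightarrow> (\<exists>xs. length xs > 1 \<and> chain T S xs \<and> hd xs = a \<and> last xs = T \<and> b \<in> set xs)"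
  unfolding on_path_def is_path_chain by auto

lemma chain_same:
  assumes "same_shared T S S'"
  shows "chain T S' xs \<Longrightarrow> chain T S xs"
  using assms by (induction xs rule: induct_list012) (auto simp: same_shared_def)

lemma chain_ad:
  assumes "a' \<notin> active S" "active S' = insert a' (active S)" "nxt S' pp = a'"
    "nxt S' a' = nxt S pp" "\<forall>c\<in>active S - {T,pp}. nxt S' c = nxt S c"
    "pp \<in> active S" "pp \<noteq> T" "\<forall>c\<in>active S - {T}. nxt S c \<in> active S"
  shows "chain T S' xs \<Longrightarrow> xs \<noteq> [] \<Longrightarrow> last xs \<noteq> a' \<Longrightarrow>
     chain T S (filter (\<lambda>c. c \<noteq> a') xs) \<and> filter (\<lambda>c. c \<noteq> a') xs \<noteq> [] \<and>
     (hd xs \<noteq> a' \<longrightarrow> hd (filter (\<lambda>c. c \<noteq> a') xs) = hd xs) \<and>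
     (hd xs = a' \<longrightarrow> hd (filter (\<lambda>c. c \<noteq> a') xs) = nxt S pp) \<and>
     last (filter (\<lambda>c. c \<noteq> a') xs) = last xs"
proof (induction xs rule: induct_list012)
  case 1
  then show ?case by simp
next
  case (2 x)
  then show ?case using assms by auto
next
  case (3 x y ys)
  have IH: "chain T S (filter (\<lambda>c. c \<noteq> a') (y # ys)) \<and> filter (\<lambda>c. c \<noteq> a') (y # ys) \<noteq> [] \<and>
     (y \<noteq> a' \<longrightarrow> hd (filter (\<lambda>c. c \<noteq> a') (y # ys)) = y) \<and>
     (y = a' \<longrightarrow> hd (filter (\<lambda>c. c \<noteq> a') (y # ys)) = nxt S pp) \<and>
     last (filter (\<lambda>c. c \<noteq> a') (y # ys)) = last (y # ys)"
    using 3 by auto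
  have x: "x \<in> active S'" "x \<noteq> T" "nxt S' x = y" using 3 by auto
  show ?case
  proof (cases "x = a'")
    case True
    then have "y = nxt S pp" using x assms by simp
    moreover have "nxt S pp \<in> active S" using assms(6,7,8) by blast
    ultimately have "y \<noteq> a'" using assms(1) by metis
    then show ?thesis using IH True \<open>y = nxt S pp\<close> by simp
  next
    case False
    then have xS: "x \<in> active S" using x assms by auto
    show ?thesis
    proof (cases "y = a'")
      case True
      have "x = pp"
      proof (rule ccontr)
        assume "x \<noteq> pp"
        then have "nxt S x = a'" using xS x True assms by auto
        then show False using assms xS x by force
      qed
      obtain z zs where fz: "filter (\<lambda>c. c \<noteq> a') (y # ys) = z # zs"
        using IH by (cases "filter (\<lambda>c. c \<noteq> a') (y # ys)") auto
      have "z = nxt S pp" using IH fz True by simp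
      then show ?thesis using IH fz False True xS \<open>x = pp\<close> assms by simp
    next
      case yn: False
      have "x \<noteq> pp" using x yn assms by auto
      then have "nxt S x = y" using xS x assms by auto
      obtain z zs where fz: "filter (\<lambda>c. c \<noteq> a') (y # ys) = z # zs"
        using IH by (cases "filter (\<lambda>c. c \<noteq> a') (y # ys)") auto
      have "z = y" using IH fz yn by simp
      have f: "filter (\<lambda>c. c \<noteq> a') (x # y # ys) = x # z # zs" using False fz by simp
      have l1: "last (x # y # ys) = last (y # ys)" by simp
      have l2: "last (x # z # zs) = last (z # zs)" by simp
      show ?thesis unfolding f l1 l2 using IH fz \<open>z = y\<close> False xS x \<open>nxt S x = y\<close> by (simp del: last.simps)
    qed
  qed
qed

fun ins :: "'a \<Rightarrow> 'a \<Rightarrow> 'a list \<Rightarrow> 'a list" where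
  "ins pr cu [] = []"
| "ins pr cu (x # xs) = (if x = pr then pr # cu # ins pr cu xs else x # ins pr cu xs)"

lemma set_ins: "set xs \<subseteq> set (ins pr cu xs)"
  by (induction xs) auto

lemma chain_rm:
  assumes "active S' = active S" "nxt S' pr = nxt S cu"
    "\<forall>c\<in>active S - {T,pr}. nxt S' c = nxt S c"
    "pr \<in> active S" "pr \<noteq> T" "cu \<in> active S" "cu \<noteq> T" "nxt S pr = cu"
  shows "chain T S' xs \<Longrightarrow> xs \<noteq> [] \<Longrightarrow> last xs \<noteq> pr \<Longrightarrow>
     chain T S (ins pr cu xs) \<and> ins pr cu xs \<noteq> [] \<and> hd (ins pr cu xs) = hd xs \<and>
     last (ins pr cu xs) = last xs"
proof (induction xs rule: induct_list012)
  case 1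
  then show ?case by simp
next
  case (2 x)
  then show ?case using assms by auto
next
  case (3 x y ys)
  have IH: "chain T S (ins pr cu (y # ys)) \<and> ins pr cu (y # ys) \<noteq> [] \<and> hd (ins pr cu (y # ys)) = y \<and>
     last (ins pr cu (y # ys)) = last (y # ys)"
    using 3 by auto
  obtain z zs where fz: "ins pr cu (y # ys) = z # zs"
    using IH by (cases "ins pr cu (y # ys)") auto
  have zy: "z = y" using IH fz by simp
  have x: "x \<in> active S" "x \<noteq> T" "nxt S' x = y" using 3 assms by auto
  show ?case
  proof (cases "x = pr")
    case True
    then show ?thesis using IH fz zy x assms by simp
  next
    case False
    then show ?thesis using IH fz zy x assms by simp
  qed
qed

lemma mb_active: "main_branch H T S c \<Longrightarrow> c \<in> active S"
  unfolding main_branch_def on_path_def is_path_def by auto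

lemma ad_active: "step_ad H T p S ev S' \<Longrightarrow> active S \<subseteq> active S'"
  unfolding step_ad_def same_shared_def
  apply (elim conjE exE)
  apply (simp split: if_split_asm)
  apply (elim conjE exE)
  apply (rule subset_insertI)
  done

lemma rm_active: "step_rm H T p S ev S' \<Longrightarrow> active S \<subseteq> active S'"
  unfolding step_rm_def same_shared_def
  apply (elim conjE)
  apply (simp only: split: if_split_asm)
  apply (elim conjE exE)
  apply simp
  done

lemma step_active:
  assumes "step H T S ev S'" shows "active S \<subseteq> active S'"
proof -
  obtain p where p: "step_inv T p S ev S' \<or> step_fail T p S ev S' \<or> step_ad H T p S ev S' \<or>
       step_rm H T p S ev S' \<or> step_contains H T p S ev S'" using assms unfolding step_def by (elim conjE exE) (rule that, assumption)
  then show ?thesis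
  proof (elim disjE)
    assume "step_inv T p S ev S'" then show ?thesis by (simp add: step_inv_def same_shared_def)
  next
    assume "step_fail T p S ev S'" then show ?thesis
      by (simp add: step_fail_def local_frame_def same_shared_def)
  next
    assume "step_contains H T p S ev S'" then show ?thesis
      by (simp add: step_contains_def local_frame_def same_shared_def)
  next
    assume "step_ad H T p S ev S'" then show ?thesis by (rule ad_active)
  next
    assume "step_rm H T p S ev S'" then show ?thesis by (rule rm_active)
  qed
qed

lemma step_back:
  assumes st: "step H T S ev S'" and a: "a \<noteq> T" and b: "b \<in> active S" and aa: "a \<in> active S"
    and op: "on_path T S' a b"
  shows "on_path T S a b"
proof -
  obtain xs where xs: "length xs > 1" "chain T S' xs" "hd xs = a" "last xs = T" "b \<in> set xs"
    using op unfolding on_path_chain by blast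
  have nS: "normal H T S" using st unfolding step_def by (rule conjunct1)
  have TS: "T \<in> active S" using nS unfolding normal_def by (elim conjE)
  have nxtS: "\<forall>c\<in>active S - {T}. nxt S c \<in> active S" using nS unfolding normal_def by (simp only: Ball_def) blast
  have goal: "\<exists>ys. ys \<noteq> [] \<and> chain T S ys \<and> hd ys = a \<and> last ys = T \<and> b \<in> set ys"
  proof -
    obtain p where p: "step_inv T p S ev S' \<or> step_fail T p S ev S' \<or> step_ad H T p S ev S' \<or>
       step_rm H T p S ev S' \<or> step_contains H T p S ev S'" using st unfolding step_def by (elim conjE exE) (rule that, assumption)
    { assume ss: "same_shared T S S'"
      have ?thesis using chain_same[OF ss xs(2)] xs by (intro exI[of _ xs]) auto }
    note same = this
    show ?thesis
    proof -
      { assume "step_inv T p S ev S' \<or> step_fail T p S ev S' \<or> step_contains H T p S ev S'"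
        then have "same_shared T S S'"
        proof (elim disjE)
          assume "step_inv T p S ev S'" then show ?thesis by (simp add: step_inv_def)
        next
          assume "step_fail T p S ev S'" then show ?thesis by (simp add: step_fail_def local_frame_def)
        next
          assume "step_contains H T p S ev S'" then show ?thesis by (simp add: step_contains_def local_frame_def)
        qed
        then have ?thesis by (rule same) }
      moreover
      { assume ad: "step_ad H T p S ev S'"
        then obtain pp where pp: "main_branch H T S pp" "pp \<noteq> T"
          "(if val S (nxt S pp) = Fin (xp S p) then
           same_shared T S S' \<and> ev = Ev p KAD R1
         else
           ev = Ev p KAD R0 \<and>
           (\<exists>a. a \<notin> active S \<and> active S' = insert a (active S) \<and>
              val S' a = Fin (xp S p) \<and> (\<forall>c \<in> active S. val S' c = val S c) \<and>
              nxt S' pp = a \<and> nxt S' a = nxt S pp \<and>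
              (\<forall>c \<in> active S - {T, pp}. nxt S' c = nxt S c)))"
          unfolding step_ad_def by (elim conjE exE) (rule that, assumption+)
        have ?thesis
        proof (cases "val S (nxt S pp) = Fin (xp S p)")
          case True
          then have "same_shared T S S'" using pp(3) by simp
          then show ?thesis by (rule same)
        next
          case False
          then obtain a' where a': "a' \<notin> active S" "active S' = insert a' (active S)"
              "nxt S' pp = a'" "nxt S' a' = nxt S pp" "\<forall>c \<in> active S - {T, pp}. nxt S' c = nxt S c"
          proof -
            have "\<exists>a. a \<notin> active S \<and> active S' = insert a (active S) \<and>
              val S' a = Fin (xp S p) \<and> (\<forall>c \<in> active S. val S' c = val S c) \<and>
              nxt S' pp = a \<and> nxt S' a = nxt S pp \<and>
              (\<forall>c \<in> active S - {T, pp}. nxt S' c = nxt S c)" using pp(3) False by simp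
            then show ?thesis using that by blast
          qed
          have ppa: "pp \<in> active S" using mb_active[OF pp(1)] .
          have la: "last xs \<noteq> a'" using xs(4) a'(1) TS by auto
          have xne: "xs \<noteq> []" using xs by auto
          note r = chain_ad[OF a'(1,2,3,4,5) ppa pp(2) nxtS xs(2) xne la]
          have "hd xs \<noteq> a'" using xs(3) aa a'(1) by auto
          then have r2: "chain T S (filter (\<lambda>c. c \<noteq> a') xs)" "filter (\<lambda>c. c \<noteq> a') xs \<noteq> []"
            "hd (filter (\<lambda>c. c \<noteq> a') xs) = a" "last (filter (\<lambda>c. c \<noteq> a') xs) = T"
            using r xs(3,4) by auto
          have "b \<in> set (filter (\<lambda>c. c \<noteq> a') xs)" using xs(5) b a'(1) by auto
          then show ?thesis using r2 by blast
        qed }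
      moreover
      { assume rm: "step_rm H T p S ev S'"
        have ?thesis
        proof (cases "\<exists>cu. main_branch H T S cu \<and> val S cu = Fin (xp S p)")
          case False
          have "same_shared T S S'" using rm unfolding step_rm_def by (elim conjE) (simp add: False)
          then show ?thesis by (rule same)
        next
          case True
          then obtain cu pr where c: "main_branch H T S cu" "val S cu = Fin (xp S p)"
            "main_branch H T S pr" "pr \<noteq> T" "nxt S pr = cu"
            "active S' = active S" "\<forall>c \<in> active S. val S' c = val S c"
            "nxt S' pr = nxt S cu" "\<forall>c \<in> active S - {T, pr}. nxt S' c = nxt S c"
          proof -
            have "\<exists>cu pred. main_branch H T S cu \<and> val S cu = Fin (xp S p) \<and>
           main_branch H T S pred \<and> pred \<noteq> T \<and> nxt S pred = cu \<and>
           active S' = active S \<and> (\<forall>c \<in> active S. val S' c = val S c) \<and>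
           nxt S' pred = nxt S cu \<and> (\<forall>c \<in> active S - {T, pred}. nxt S' c = nxt S c)"
              using rm unfolding step_rm_def by (elim conjE) (simp only: if_P[OF True])
            then show ?thesis using that by blast
          qed
          have "val S T = PInf" using nS unfolding normal_def by (elim conjE)
          then have cuT: "cu \<noteq> T" using c(2) by auto
          have xne: "xs \<noteq> []" using xs by auto
          have lp: "last xs \<noteq> pr" using xs c by auto
          note r = chain_rm[OF c(6,8,9) mb_active[OF c(3)] c(4) mb_active[OF c(1)] cuT c(5) xs(2) xne lp]
          then show ?thesis using xs set_ins[of xs pr cu]
            by (intro exI[of _ "ins pr cu xs"]) auto
        qed }
      ultimately show ?thesis using p by blast
    qed
  qed
  then obtain ys where ys: "ys \<noteq> []" "chain T S ys" "hd ys = a" "last ys = T" "b \<in> set ys" by blast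
  have "length ys > 1"
  proof (rule ccontr)
    assume "\<not> length ys > 1"
    then obtain y where "ys = [y]" using ys(1) by (cases ys) auto
    then show False using ys a by simp
  qed
  then show ?thesis unfolding on_path_chain using ys by blast
qed

theorem lemma4p12:
  fixes H T :: "'a::countable" and S :: "nat \<Rightarrow> ('a, 'p) lstate"
    and e :: "nat \<Rightarrow> 'p event" and N :: enat and i :: nat and a b :: 'a
  assumes "infinite (UNIV :: 'a set)" and "H \<noteq> T"
    and "history H T S e N" and "enat i \<le> N"
    and "a \<in> active (S i)" and "b \<in> active (S i)" and "a \<noteq> T"
    and "\<not> on_path T (S i) a b"
  shows "(enat (Suc i) \<le> N \<longrightarrow> \<not> on_path T (S (Suc i)) a b) \<and>
         (\<forall>j. i < j \<and> enat j \<le> N \<longrightarrow> \<not> on_path T (S j) a b)"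
proof -
  have stp: "\<And>k. enat (Suc k) \<le> N \<Longrightarrow> step H T (S k) (e k) (S (Suc k))"
    using assms(3) unfolding history_def by blast
  have gen: "enat (i + k) \<le> N \<longrightarrow> b \<in> active (S (i + k)) \<and> \<not> on_path T (S (i + k)) a b \<and> a \<in> active (S (i + k))" for k
  proof (induction k)
    case 0
    then show ?case using assms by simp
  next
    case (Suc k)
    show ?case
    proof
      assume le: "enat (i + Suc k) \<le> N"
      then have le': "enat (i + k) \<le> N"
        by (metis add_Suc_right enat_ord_simps(1) le_SucI order_trans order_refl)
      have st: "step H T (S (i + k)) (e (i + k)) (S (Suc (i + k)))" using stp le by simp
      have IH: "b \<in> active (S (i + k))" "\<not> on_path T (S (i + k)) a b" "a \<in> active (S (i + k))" using Suc le' by auto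
      show "b \<in> active (S (i + Suc k)) \<and> \<not> on_path T (S (i + Suc k)) a b \<and> a \<in> active (S (i + Suc k))"
        using step_active[OF st] step_back[OF st assms(7) IH(1) IH(3)] IH by auto
    qed
  qed
  have "\<forall>j. i < j \<and> enat j \<le> N \<longrightarrow> \<not> on_path T (S j) a b"
  proof (intro allI impI)
    fix j assume "i < j \<and> enat j \<le> N"
    then show "\<not> on_path T (S j) a b" using gen[of "j - i"] by simp
  qed
  then show ?thesis by auto
qed

end
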